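(* Let $c$ be a positive integer and let $\nu$ be the smallest positive integer that does not divide $c$. There is a constant $C$ depending only on $c$ such that for every integer $n>c$: (1) $\left|\mathrm{mup}(n,c)-\frac{n}{\nu}\right|\le C$; and (2) in every unique partition of $n$ and $c$ with exactly $\mathrm{mup}(n,c)$ parts, all but at most $C$ of the parts are equal to $\nu$.
   Context: A unique partition of positive integers $A$ and $B$ consists of positive integers $A_1,\dots,A_a$ with $\sum_i A_i=A$ and $B_1,\dots,B_b$ with $\sum_j B_j=B$ such that, viewing these as $a+b$ indexed items, the only subsets of the items whose sum equals $A$ are the set of items $\{A_1,\dots,A_a\}$ and, in case $A=B$, also its complement. Its parts are the $a+b$ numbers $A_i,B_j$. $\mathrm{mup}(A,B)$ is the maximum of $a+b$ over all unique partitions of $A$ and $B$ (with $\mathrm{mup}(1,1)=2$). *)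

theory Defs
  imports Complex_Main
begin

definition unique_partition :: "nat \<Rightarrow> nat \<Rightarrow> nat list \<Rightarrow> nat list \<Rightarrow> bool" where
  "unique_partition A B xs ys \<longleftrightarrow>
     (\<forall>x\<in>set xs. 0 < x) \<and> (\<forall>y\<in>set ys. 0 < y) \<and>
     sum_list xs = A \<and> sum_list ys = B \<and>
     (\<forall>S. S \<subseteq> {0..<length (xs @ ys)} \<longrightarrow>
        ((\<Sum>i\<in>S. (xs @ ys) ! i) = A \<longleftrightarrow>
          (S = {0..<length xs} \<or> (A = B \<and> S = {length xs..<length (xs @ ys)}))))"

definition mup :: "nat \<Rightarrow> nat \<Rightarrow> nat" where
  "mup A B = Max {length xs + length ys | xs ys. unique_partition A B xs ys}"

end

theory Submission
  imports Defs
begin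

lemma len_le_sum: "\<forall>x\<in>set xs. 0 < x \<Longrightarrow> length xs \<le> sum_list (xs::nat list)"
  by (induction xs) auto

lemma up_len: "unique_partition A B xs ys \<Longrightarrow> length xs \<le> A \<and> length ys \<le> B"
  unfolding unique_partition_def using len_le_sum by blast

lemma count_lt:
  assumes up: "unique_partition n c xs ys" and cn: "c < n" and k: "0 < k" "k dvd c" and c0: "0 < c"
  shows "card {i. i < length xs \<and> xs ! i = k} < c div k"
proof (rule ccontr)
  let ?I = "{i. i < length xs \<and> xs ! i = k}"
  let ?L = "xs @ ys"
  let ?N = "length ?L"
  assume "\<not> card ?I < c div k"
  then have "c div k \<le> card ?I" by simp
  then obtain S where S: "S \<subseteq> ?I" "card S = c div k" by (meson obtain_subset_with_card_n)
  have finS: "finite S" using S(1) by (rule finite_subset) auto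
  have sS: "(\<Sum>i\<in>S. ?L ! i) = c"
  proof -
    have "(\<Sum>i\<in>S. ?L ! i) = (\<Sum>i\<in>S. k)"
      by (rule sum.cong) (use S(1) in \<open>auto simp: nth_append\<close>)
    also have "\<dots> = c" using S(2) k by simp
    finally show ?thesis .
  qed
  have SN: "S \<subseteq> {0..<?N}" using S(1) by auto
  have tot: "(\<Sum>i\<in>{0..<?N}. ?L ! i) = n + c"
  proof -
    have "(\<Sum>i\<in>{0..<?N}. ?L ! i) = sum_list ?L" by (simp only: sum_list_sum_nth)
    then show ?thesis using up unfolding unique_partition_def by simp
  qed
  have sT: "(\<Sum>i\<in>{0..<?N} - S. ?L ! i) = n"
    using sum_diff_nat[OF finS SN, of "\<lambda>i. ?L ! i"] tot sS by simp
  have U: "\<forall>S. S \<subseteq> {0..<?N} \<longrightarrow> ((\<Sum>i\<in>S. ?L ! i) = n \<longleftrightarrow>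
          (S = {0..<length xs} \<or> (n = c \<and> S = {length xs..<?N})))"
    using up unfolding unique_partition_def by blast
  have T: "{0..<?N} - S = {0..<length xs}"
    using U[rule_format, of "{0..<?N} - S"] sT cn by auto
  have "S \<noteq> {}" using S(2) k c0 by (auto simp: dvd_div_eq_0_iff)
  then obtain i where i: "i \<in> S" by blast
  then have "i < length xs" using S(1) by auto
  then have "i \<in> {0..<?N} - S" using T by simp
  then show False using i by simp
qed

lemma part_bound:
  assumes up: "unique_partition n c xs ys" and cn: "c < n" and c0: "0 < c"
    and nu0: "0 < \<nu>" and nud: "\<forall>k. 0 < k \<and> k < \<nu> \<longrightarrow> k dvd c"
  shows "\<exists>bb. \<nu> * (length xs + length ys) + bb \<le> n + \<nu> * (\<nu> * c) \<and>
     card {i. i < length (xs @ ys) \<and> (xs @ ys) ! i \<noteq> \<nu>} \<le> \<nu> * c + bb"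
proof -
  define Sm where "Sm = {i. i < length xs \<and> xs ! i < \<nu>}"
  define G where "G = {i. i < length xs \<and> \<nu> \<le> xs ! i}"
  define B where "B = {i. i < length xs \<and> \<nu> < xs ! i}"
  have pos: "\<forall>x\<in>set xs. 0 < x" and sx: "sum_list xs = n" and sy: "sum_list ys = c"
    using up unfolding unique_partition_def by auto
  have ly: "length ys \<le> c" using up_len[OF up] by simp
  have "Sm \<subseteq> (\<Union>k\<in>{1..<\<nu>}. {i. i < length xs \<and> xs ! i = k})"
  proof
    fix i assume "i \<in> Sm"
    then have "i < length xs" "xs ! i < \<nu>" unfolding Sm_def by auto
    moreover have "0 < xs ! i" using pos \<open>i < length xs\<close> by auto
    ultimately show "i \<in> (\<Union>k\<in>{1..<\<nu>}. {i. i < length xs \<and> xs ! i = k})" by auto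
  qed
  then have "card Sm \<le> card (\<Union>k\<in>{1..<\<nu>}. {i. i < length xs \<and> xs ! i = k})"
    by (rule card_mono[rotated]) auto
  also have "\<dots> \<le> (\<Sum>k\<in>{1..<\<nu>}. card {i. i < length xs \<and> xs ! i = k})"
    by (rule card_UN_le) simp
  also have "\<dots> \<le> (\<Sum>k\<in>{1..<\<nu>}. c)"
  proof (rule sum_mono)
    fix k assume k: "k \<in> {1..<\<nu>}"
    then have "k dvd c" using nud by auto
    then have "card {i. i < length xs \<and> xs ! i = k} < c div k"
      using count_lt[OF up cn _ _ c0] k by auto
    then show "card {i. i < length xs \<and> xs ! i = k} \<le> c"
      using div_le_dividend[of c k] by linarith
  qed
  also have "\<dots> = (\<nu> - 1) * c" by simp
  finally have cSm: "card Sm \<le> (\<nu> - 1) * c" .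
  have "{0..<length xs} = Sm \<union> G" unfolding Sm_def G_def by auto
  moreover have "Sm \<inter> G = {}" unfolding Sm_def G_def by auto
  ultimately have lx: "length xs = card Sm + card G"
    by (metis card_Un_disjoint card_atLeastLessThan diff_zero finite_Un finite_atLeastLessThan)
  have finG: "finite G" unfolding G_def by simp
  have BG: "B \<subseteq> G" unfolding B_def G_def by auto
  have "(\<Sum>i\<in>G. xs ! i) = (\<Sum>i\<in>G. \<nu> + (xs ! i - \<nu>))"
    by (rule sum.cong) (auto simp: G_def)
  also have "\<dots> = \<nu> * card G + (\<Sum>i\<in>G. xs ! i - \<nu>)"
    by (simp add: sum.distrib)
  finally have e1: "(\<Sum>i\<in>G. xs ! i) = \<nu> * card G + (\<Sum>i\<in>G. xs ! i - \<nu>)" .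
  have "card B = (\<Sum>i\<in>B. 1)" by simp
  also have "\<dots> \<le> (\<Sum>i\<in>B. xs ! i - \<nu>)"
    by (rule sum_mono) (auto simp: B_def)
  also have "\<dots> \<le> (\<Sum>i\<in>G. xs ! i - \<nu>)"
    by (rule sum_mono2[OF finG BG]) auto
  finally have e2: "card B \<le> (\<Sum>i\<in>G. xs ! i - \<nu>)" .
  have "(\<Sum>i\<in>G. xs ! i) \<le> (\<Sum>i\<in>{0..<length xs}. xs ! i)"
    by (rule sum_mono2) (auto simp: G_def)
  also have "\<dots> = n" using sx by (simp add: sum_list_sum_nth)
  finally have e3: "\<nu> * card G + card B \<le> n" using e1 e2 by linarith
  have sub: "{i. i < length (xs @ ys) \<and> (xs @ ys) ! i \<noteq> \<nu>} \<subseteq> (Sm \<union> B) \<union> {length xs..<length (xs @ ys)}"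
    unfolding Sm_def B_def by (auto simp: nth_append)
  have "card {i. i < length (xs @ ys) \<and> (xs @ ys) ! i \<noteq> \<nu>} \<le> card ((Sm \<union> B) \<union> {length xs..<length (xs @ ys)})"
    by (rule card_mono[OF _ sub]) (auto simp: Sm_def B_def)
  also have "\<dots> \<le> card (Sm \<union> B) + card {length xs..<length (xs @ ys)}" by (rule card_Un_le)
  also have "\<dots> \<le> card Sm + card B + length ys" using card_Un_le[of Sm B] by simp
  finally have cnon: "card {i. i < length (xs @ ys) \<and> (xs @ ys) ! i \<noteq> \<nu>} \<le> card Sm + card B + length ys" .
  have sl: "card Sm + length ys \<le> \<nu> * c"
  proof -
    have "(\<nu> - 1) * c + c = \<nu> * c" using nu0 by (cases \<nu>) auto
    then show ?thesis using cSm ly by linarith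
  qed
  then have "\<nu> * (card Sm + length ys) \<le> \<nu> * (\<nu> * c)" by (rule mult_le_mono2)
  then have "\<nu> * (length xs + length ys) + card B \<le> n + \<nu> * (\<nu> * c)"
    using lx e3 by (simp add: algebra_simps)
  moreover have "card {i. i < length (xs @ ys) \<and> (xs @ ys) ! i \<noteq> \<nu>} \<le> \<nu> * c + card B"
    using cnon sl by linarith
  ultimately show ?thesis by blast
qed

lemma construct:
  assumes c0: "0 < c" and nu0: "0 < \<nu>" and nd: "\<not> \<nu> dvd c" and m: "m * \<nu> + c < n"
  shows "unique_partition n c (replicate m \<nu> @ [n - m * \<nu>]) [c]"
proof -
  define R where "R = n - m * \<nu>"
  define L where "L = replicate m \<nu> @ [R] @ [c]"
  have Lm: "L ! m = R" unfolding L_def by (simp add: nth_append)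
  have LSm: "L ! Suc m = c" unfolding L_def by (simp add: nth_append)
  have Li: "\<And>i. i < m \<Longrightarrow> L ! i = \<nu>" unfolding L_def by (simp add: nth_append)
  have Rn: "m * \<nu> + R = n" unfolding R_def using m by simp
  have key: "(\<Sum>i\<in>S. L ! i) = \<nu> * card (S \<inter> {0..<m}) + (if m \<in> S then R else 0)
      + (if Suc m \<in> S then c else 0)" if S: "S \<subseteq> {0..<Suc (Suc m)}" for S
  proof -
    let ?A = "S \<inter> {0..<m}"
    have fS: "finite S" using S finite_subset by blast
    have "(\<Sum>i\<in>S. L ! i) = (\<Sum>i\<in>S - ?A. L ! i) + (\<Sum>i\<in>?A. L ! i)"
      by (rule sum.subset_diff) (auto simp: fS)
    moreover have "(\<Sum>i\<in>?A. L ! i) = (\<Sum>i\<in>?A. \<nu>)" by (rule sum.cong) (auto simp: Li)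
    moreover have "S - ?A = (if m \<in> S then {m} else {}) \<union> (if Suc m \<in> S then {Suc m} else {})"
      using S by (auto simp: less_Suc_eq)
    ultimately show ?thesis by (auto simp: Lm LSm)
  qed
  have U: "(\<Sum>i\<in>S. L ! i) = n \<longleftrightarrow> S = {0..<Suc m}" if S: "S \<subseteq> {0..<Suc (Suc m)}" for S
  proof
    assume "S = {0..<Suc m}"
    then show "(\<Sum>i\<in>S. L ! i) = n" using key[OF S] Rn by (simp add: Int_absorb2 mult.commute)
  next
    assume sn: "(\<Sum>i\<in>S. L ! i) = n"
    define a where "a = card (S \<inter> {0..<m})"
    have am: "a \<le> m" unfolding a_def by (metis card_atLeastLessThan card_mono diff_zero finite_atLeastLessThan inf_le2)
    have amv: "\<nu> * a \<le> \<nu> * m" using am by simp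
    have eq: "\<nu> * a + (if m \<in> S then R else 0) + (if Suc m \<in> S then c else 0) = n"
      using key[OF S] sn a_def by simp
    show "S = {0..<Suc m}"
    proof (cases "m \<in> S")
      case True
      show ?thesis
      proof (cases "Suc m \<in> S")
        case True
        with \<open>m \<in> S\<close> eq Rn have "\<nu> * a + c = \<nu> * m" by (simp add: mult.commute)
        then have "c = \<nu> * (m - a)" by (simp add: diff_mult_distrib2)
        then show ?thesis using nd by auto
      next
        case False
        with \<open>m \<in> S\<close> eq Rn have "\<nu> * a + R = \<nu> * m + R" by (simp add: mult.commute)
        then have "\<nu> * a = \<nu> * m" by linarith
        then have "a = m" using nu0 by simp
        then have "S \<inter> {0..<m} = {0..<m}"
          unfolding a_def by (metis card_atLeastLessThan card_subset_eq diff_zero finite_atLeastLessThan inf_le2)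
        then show ?thesis using S False \<open>m \<in> S\<close> by (auto simp: less_Suc_eq)
      qed
    next
      case False
      then have "\<nu> * a + (if Suc m \<in> S then c else 0) = n" using eq by simp
      moreover have "\<nu> * a + c < n" using amv m by (metis add_le_mono1 le_less_trans mult.commute)
      ultimately show ?thesis by (auto split: if_splits)
    qed
  qed
  have LL: "replicate m \<nu> @ [n - m * \<nu>] @ [c] = L" unfolding L_def R_def by simp
  show ?thesis
    unfolding unique_partition_def
  proof (intro conjI allI impI)
    show "\<forall>x\<in>set (replicate m \<nu> @ [n - m * \<nu>]). 0 < x" using nu0 m by auto
    show "\<forall>y\<in>set [c]. 0 < y" using c0 by simp
    show "sum_list (replicate m \<nu> @ [n - m * \<nu>]) = n" using m by (simp add: sum_list_replicate)
    show "sum_list [c] = c" by simp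
  next
    fix S assume S: "S \<subseteq> {0..<length ((replicate m \<nu> @ [n - m * \<nu>]) @ [c])}"
    then have S': "S \<subseteq> {0..<Suc (Suc m)}" by simp
    show "(\<Sum>i\<in>S. ((replicate m \<nu> @ [n - m * \<nu>]) @ [c]) ! i) = n \<longleftrightarrow>
        (S = {0..<length (replicate m \<nu> @ [n - m * \<nu>])} \<or>
        n = c \<and> S = {length (replicate m \<nu> @ [n - m * \<nu>])..<length ((replicate m \<nu> @ [n - m * \<nu>]) @ [c])})"
      using U[OF S'] m LL by simp
  qed
qed

lemma real_part:
  fixes nu n t c :: nat
  assumes nu: "1 \<le> nu" and L: "n \<le> nu * t + c" and U: "nu * t \<le> n + nu * (nu * c)"
  shows "\<bar>real t - real n / real nu\<bar> \<le> real (3 * nu * nu * c)"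
proof -
  have nur: "real nu \<ge> 1" using nu by simp
  have L': "real n \<le> real nu * real t + real c" using L by (metis of_nat_add of_nat_le_iff of_nat_mult)
  have U': "real nu * real t \<le> real n + real nu * (real nu * real c)"
    using U by (metis of_nat_add of_nat_le_iff of_nat_mult)
  have e: "real t - real n / real nu = (real nu * real t - real n) / real nu" using nur
    by (simp add: field_simps)
  have a1: "(real nu * real t - real n) / real nu \<le> real nu * real c"
    using U' nur by (simp add: divide_le_eq algebra_simps)
  have a2: "- real c \<le> (real nu * real t - real n) / real nu"
  proof -
    have "- real c * real nu \<le> - real c" using nur by (simp add: mult_le_cancel_left1)
    also have "- real c \<le> real nu * real t - real n" using L' by simp
    finally show ?thesis using nur by (simp add: le_divide_eq)
  qed
  have c1: "real nu * real c \<le> real (3 * nu * nu * c)"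
  proof -
    have "nu * c \<le> 3 * nu * nu * c" using nu by (simp add: mult_le_mono)
    then show ?thesis by (metis of_nat_le_iff of_nat_mult)
  qed
  have c2: "real c \<le> real (3 * nu * nu * c)"
  proof -
    have "c \<le> 3 * nu * nu * c" using nu by (simp add: mult_le_mono)
    then show ?thesis by (metis of_nat_le_iff)
  qed
  show ?thesis unfolding e using a1 a2 c1 c2 by (simp add: abs_le_iff)
qed

theorem proposition3p2:
  fixes c :: nat
  assumes "0 < c"
  defines "\<nu> \<equiv> (LEAST k::nat. 0 < k \<and> \<not> k dvd c)"
  shows "\<exists>C::real. \<forall>n::nat. n > c \<longrightarrow>
           \<bar>real (mup n c) - real n / real \<nu>\<bar> \<le> C \<and>
           (\<forall>xs ys. unique_partition n c xs ys \<and> length xs + length ys = mup n c \<longrightarrow>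
              real (card {i. i < length (xs @ ys) \<and> (xs @ ys) ! i \<noteq> \<nu>}) \<le> C)"
proof -
  have c0: "0 < c" by fact
  have Pc: "0 < Suc c \<and> \<not> Suc c dvd c" using c0 by (auto dest: dvd_imp_le)
  have Pnu: "0 < \<nu> \<and> \<not> \<nu> dvd c" unfolding \<nu>_def by (rule LeastI[of _ "Suc c"]) (rule Pc)
  then have nu0: "0 < \<nu>" and nd: "\<not> \<nu> dvd c" by auto
  have nud: "\<forall>k. 0 < k \<and> k < \<nu> \<longrightarrow> k dvd c"
  proof (intro allI impI)
    fix k assume k: "0 < k \<and> k < \<nu>"
    then have "\<not> (0 < k \<and> \<not> k dvd c)" unfolding \<nu>_def by (intro not_less_Least) auto
    then show "k dvd c" using k by simp
  qed
  show ?thesis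
  proof (intro exI[of _ "real (3 * \<nu> * \<nu> * c)"] allI impI conjI)
    fix n :: nat assume cn: "c < n"
    define M where "M = {length xs + length ys | xs ys. unique_partition n c xs ys}"
    have mupM: "mup n c = Max M" unfolding M_def mup_def by simp
    have finM: "finite M"
    proof (rule finite_subset[of _ "{..n + c}"])
      show "M \<subseteq> {..n + c}" unfolding M_def using up_len by fastforce
    qed simp
    define m where "m = (n - c - 1) div \<nu>"
    have "m * \<nu> \<le> n - c - 1" unfolding m_def by (rule div_times_less_eq_dividend)
    then have mb: "m * \<nu> + c < n" using cn by linarith
    have "n - c - 1 = m * \<nu> + (n - c - 1) mod \<nu>" unfolding m_def by simp
    moreover have "(n - c - 1) mod \<nu> < \<nu>" using nu0 by simp
    ultimately have mb2: "n \<le> \<nu> * (m + 2) + c" using cn by (simp add: algebra_simps) 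
    have "m + 2 = length (replicate m \<nu> @ [n - m * \<nu>]) + length [c]" by simp
    then have "m + 2 \<in> M" unfolding M_def using construct[OF c0 nu0 nd mb] by blast
    then have Mne: "M \<noteq> {}" and m2: "m + 2 \<le> mup n c" using finM mupM by auto
    have L: "n \<le> \<nu> * mup n c + c" using mb2 m2
      by (meson add_le_mono1 le_trans mult_le_mono2)
    have "mup n c \<in> M" using Max_in[OF finM Mne] mupM by simp
    then obtain xs ys where up: "unique_partition n c xs ys" and t: "mup n c = length xs + length ys"
      unfolding M_def by blast
    then have U: "\<nu> * mup n c \<le> n + \<nu> * (\<nu> * c)" using part_bound[OF up cn c0 nu0 nud] by auto
    show "\<bar>real (mup n c) - real n / real \<nu>\<bar> \<le> real (3 * \<nu> * \<nu> * c)"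
      by (rule real_part) (use nu0 L U in auto)
      fix xs ys assume h: "unique_partition n c xs ys \<and> length xs + length ys = mup n c"
      obtain bb where bb: "\<nu> * mup n c + bb \<le> n + \<nu> * (\<nu> * c)"
        "card {i. i < length (xs @ ys) \<and> (xs @ ys) ! i \<noteq> \<nu>} \<le> \<nu> * c + bb"
        using part_bound[OF conjunct1[OF h] cn c0 nu0 nud] h by auto
      have "bb \<le> \<nu> * (\<nu> * c) + c" using bb(1) L by linarith
      then have "card {i. i < length (xs @ ys) \<and> (xs @ ys) ! i \<noteq> \<nu>} \<le> \<nu> * c + \<nu> * (\<nu> * c) + c"
        using bb(2) by linarith
      also have "\<dots> \<le> 3 * \<nu> * \<nu> * c"
      proof -
        have a: "\<nu> * c \<le> \<nu> * \<nu> * c" using nu0 by simp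
        have b: "c \<le> \<nu> * \<nu> * c" using nu0 by simp
        have d: "\<nu> * (\<nu> * c) = \<nu> * \<nu> * c" by (simp add: mult.assoc)
        have e: "3 * \<nu> * \<nu> * c = 3 * (\<nu> * \<nu> * c)" by (simp add: mult.assoc)
        show ?thesis using a b d e by linarith
      qed
      finally show "real (card {i. i < length (xs @ ys) \<and> (xs @ ys) ! i \<noteq> \<nu>}) \<le> real (3 * \<nu> * \<nu> * c)"
        by (metis of_nat_le_iff)
  qed
qed

end
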